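(* Let $\mu,\kappa>0$ and consider the energy $W(B_e)=\frac{\mu}{2}\Big(\mathrm{tr}\frac{B_e}{(\det B_e)^{1/3}}-3\Big)+\frac{\kappa}{4}\big[(\det B_e-1)-\log\det B_e\big]$ with $B_e=F_eF_e^T$, $F_e\in\mathrm{GL}^+(3)$, and let $\tau_e$ be the associated Kirchhoff stress, whose deviatoric part is $\mathrm{dev}_3\tau_e=\mu\,\mathrm{dev}_3\big(B_e/(\det B_e)^{1/3}\big)$. Then $$\big\langle F_e^{-1}(\mathrm{dev}_3\tau_e)F_e^{-T},\mathbb{1}\big\rangle=\frac{\mu}{(\det B_e)^{4/3}}\Big[3\det B_e-\frac13\,\mathrm{tr}(B_e)\,\mathrm{tr}(\mathrm{Cof}\,B_e)\Big],$$ and this quantity vanishes if and only if $B_e$ is a positive multiple of $\mathbb{1}$, i.e. if and only if $F_e\in\mathbb{R}_+\cdot\mathrm{SO}(3)$. In particular, the right-hand side of the Simo–Hughes flow rule $\frac{d}{dt}[\overline C_p^{-1}]=-\frac23\lambda\,\mathrm{tr}(B_e)\,F^{-1}\frac{\mathrm{dev}_3\tau_e}{\|\mathrm{dev}_3\tau_e\|}F^{-T}$ ($\overline C_p=C_p/(\det C_p)^{1/3}$, $\lambda>0$) in general yields $\frac{d}{dt}\det\overline C_p^{-1}\neq0$.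
   Context: $\langle X,Y\rangle=\mathrm{tr}(XY^T)$, $\|\cdot\|$ Frobenius norm, $\mathrm{dev}_3X=X-\frac13\mathrm{tr}(X)\mathbb{1}$, $\mathrm{Cof}\,X=(\det X)X^{-T}$. Kinematics: $F\in\mathrm{GL}^+(3)$, $F_p\in\mathrm{GL}^+(3)$, $F_e=FF_p^{-1}$, $C_p=F_p^TF_p$; the derivative of $\det\overline C_p^{-1}$ along the flow is $\det\overline C_p^{-1}\langle\mathbb{1},\frac{d}{dt}[\overline C_p^{-1}]\overline C_p\rangle$. *)

theory Defs
  imports "HOL-Analysis.Analysis"
begin

type_synonym mat3 = "real^3^3"

definition frob_inner :: "mat3 \<Rightarrow> mat3 \<Rightarrow> real" where
  "frob_inner X Y = trace (X ** transpose Y)"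

definition frob_norm :: "mat3 \<Rightarrow> real" where
  "frob_norm X = sqrt (frob_inner X X)"

definition dev3 :: "mat3 \<Rightarrow> mat3" where
  "dev3 X = X - ((1/3) * trace X) *\<^sub>R mat 1"

definition Cof :: "mat3 \<Rightarrow> mat3" where
  "Cof X = det X *\<^sub>R matrix_inv (transpose X)"

definition GLplus :: "mat3 set" where
  "GLplus = {F. det F > 0}"

definition RplusSO3 :: "mat3 set" where
  "RplusSO3 = {c *\<^sub>R Q | c Q. c > 0 \<and> rotation_matrix Q}"

definition Bmat :: "mat3 \<Rightarrow> mat3" where
  "Bmat Fe = Fe ** transpose Fe"

definition W_energy :: "real \<Rightarrow> real \<Rightarrow> mat3 \<Rightarrow> real" where
  "W_energy \<mu> \<kappa> B =
     \<mu>/2 * (trace B / (det B) powr (1/3) - 3) + \<kappa>/4 * ((det B - 1) - ln (det B))"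

definition Cbar_p :: "mat3 \<Rightarrow> mat3" where
  "Cbar_p Fp = (1 / (det (transpose Fp ** Fp)) powr (1/3)) *\<^sub>R (transpose Fp ** Fp)"

text \<open>Right-hand side of the Simo-Hughes flow rule for d/dt [Cbar_p^{-1}], with F = F_e F_p.\<close>
definition SH_rhs :: "real \<Rightarrow> mat3 \<Rightarrow> mat3 \<Rightarrow> mat3 \<Rightarrow> mat3" where
  "SH_rhs lam Fe Fp \<tau> =
     (- (2/3) * lam * trace (Bmat Fe)) *\<^sub>R
       (matrix_inv (Fe ** Fp) ** ((1 / frob_norm (dev3 \<tau>)) *\<^sub>R dev3 \<tau>)
          ** matrix_inv (transpose (Fe ** Fp)))"

text \<open>d/dt det(Cbar_p^{-1}) = det(Cbar_p^{-1}) <1, d/dt[Cbar_p^{-1}] Cbar_p> along the flow.\<close>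
definition SH_ddet :: "real \<Rightarrow> mat3 \<Rightarrow> mat3 \<Rightarrow> mat3 \<Rightarrow> real" where
  "SH_ddet lam Fe Fp \<tau> =
     det (matrix_inv (Cbar_p Fp)) * frob_inner (mat 1) (SH_rhs lam Fe Fp \<tau> ** Cbar_p Fp)"

end

theory Submission
  imports Defs
begin

lemma mm_sub_r: "(A::mat3) ** (B - C) = A ** B - A ** C"
  by (simp add: vec_eq_iff matrix_matrix_mult_def sum_3 algebra_simps)
lemma mm_sub_l: "((B::mat3) - C) ** A = B ** A - C ** A"
  by (simp add: vec_eq_iff matrix_matrix_mult_def sum_3 algebra_simps)
lemma mm_scale_r: "(A::mat3) ** (c *\<^sub>R B) = c *\<^sub>R (A ** B)"
  by (simp add: vec_eq_iff matrix_matrix_mult_def sum_3 algebra_simps)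
lemma mm_scale_l: "(c *\<^sub>R (A::mat3)) ** B = c *\<^sub>R (A ** B)"
  by (simp add: vec_eq_iff matrix_matrix_mult_def sum_3 algebra_simps)
lemma mm_neg_l: "(- (A::mat3)) ** B = - (A ** B)"
  by (simp add: vec_eq_iff matrix_matrix_mult_def sum_3 algebra_simps)
lemma trace_scale: "trace (c *\<^sub>R (A::mat3)) = c * trace A"
  by (simp add: trace_def sum_3 algebra_simps)
lemma trace_transpose: "trace (transpose (A::mat3)) = trace A"
  by (simp add: trace_def sum_3 transpose_def)
lemma trace_inner: "trace ((A::mat3) ** transpose B) = A \<bullet> B"
  by (simp add: trace_def inner_vec_def matrix_matrix_mult_def transpose_def sum_3 algebra_simps)
lemma trace_I3: "trace (mat 1 :: mat3) = 3"
  by (simp add: trace_I)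
lemma det_scale: "det (c *\<^sub>R (A::mat3)) = c^3 * det A"
  by (simp add: det_3 algebra_simps power3_eq_cube)
lemma inv_ok: assumes "det (A::mat3) \<noteq> 0"
  shows "A ** matrix_inv A = mat 1 \<and> matrix_inv A ** A = mat 1"
proof -
  have "invertible A" using assms invertible_det_nz by blast
  then have "\<exists>A'. A ** A' = mat 1 \<and> A' ** A = mat 1" unfolding invertible_def by blast
  then show ?thesis unfolding matrix_inv_def by (rule someI_ex)
qed
lemma inv_unique: assumes "(A::mat3) ** B = mat 1" shows "matrix_inv A = B"
proof -
  have BA: "B ** A = mat 1" using assms matrix_left_right_inverse by blast
  have "det A * det B = 1" using assms det_mul[of A B] by simp
  then have "det A \<noteq> 0" by auto
  then have "matrix_inv A ** A = mat 1" using inv_ok by blast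
  then have "matrix_inv A = matrix_inv A ** (A ** B)" using assms by simp
  also have "\<dots> = B" by (simp add: matrix_mul_assoc \<open>matrix_inv A ** A = mat 1\<close>)
  finally show ?thesis .
qed
lemma inv_transpose: assumes "det (A::mat3) \<noteq> 0"
  shows "matrix_inv (transpose A) = transpose (matrix_inv A)"
  apply (rule inv_unique)
  using inv_ok[OF assms] by (metis matrix_transpose_mul transpose_mat)
lemma frob_I_r: "frob_inner X (mat 1) = trace X"
  by (simp add: frob_inner_def)
lemma frob_I_l: "frob_inner (mat 1) X = trace X"
  by (simp add: frob_inner_def trace_transpose)
lemma sandwich: "(G::mat3) ** (c *\<^sub>R B - e *\<^sub>R mat 1) ** H = c *\<^sub>R (G ** B ** H) - e *\<^sub>R (G ** H)"
  by (simp add: mm_sub_r mm_sub_l mm_scale_r mm_scale_l)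

lemma part123:
  fixes F :: mat3
  assumes dF: "det F > 0"
  defines "G \<equiv> matrix_inv F" and "B \<equiv> F ** transpose F"
  shows "trace B * trace (G ** transpose G) \<ge> 9"
    and "trace B * trace (G ** transpose G) = 9 \<longleftrightarrow> (\<exists>c>0. B = c *\<^sub>R mat 1)"
proof -
  have FG: "F ** G = mat 1" and GF: "G ** F = mat 1" using inv_ok[of F] dF G_def by auto
  define H where "H = transpose G"
  have FH: "F \<bullet> H = 3" unfolding H_def
    by (metis trace_inner transpose_transpose FG trace_I3)
  have FF: "F \<bullet> F = trace B" unfolding B_def by (simp add: trace_inner)
  have HH: "H \<bullet> H = trace (G ** transpose G)" unfolding H_def
    by (metis trace_inner trace_mul_sym transpose_transpose)
  have cs: "F \<bullet> H \<le> norm F * norm H" by (rule norm_cauchy_schwarz)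
  have nn: "norm F ^2 = trace B" "norm H ^2 = trace (G ** transpose G)"
    using FF HH by (simp_all add: power2_norm_eq_inner)
  have "(3::real)^2 \<le> (norm F * norm H)^2" using power_mono[OF cs[unfolded FH], of 2] by simp
  then have "9 \<le> (norm F * norm H)^2" by simp
  then show "trace B * trace (G ** transpose G) \<ge> 9" using nn by (simp add: power_mult_distrib)
  show "trace B * trace (G ** transpose G) = 9 \<longleftrightarrow> (\<exists>c>0. B = c *\<^sub>R mat 1)"
  proof
    assume "trace B * trace (G ** transpose G) = 9"
    then have "(norm F * norm H)^2 = 3^2" using nn by (simp add: power_mult_distrib)
    moreover have "norm F * norm H \<ge> 0" by simp
    ultimately have "norm F * norm H = 3" using power2_eq_iff_nonneg[of "norm F * norm H" 3] by simp
    then have "F \<bullet> H = norm F * norm H" using FH by simp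
    then have eq: "norm F *\<^sub>R H = norm H *\<^sub>R F" using norm_cauchy_schwarz_eq by blast
    have "norm F \<noteq> 0" "norm H \<noteq> 0" using \<open>norm F * norm H = 3\<close> by auto
    then have nF: "norm F > 0" "norm H > 0" by auto
    define k where "k = norm H / norm F"
    have k: "k > 0" using nF k_def by simp
    have "H = (1/norm F) *\<^sub>R (norm F *\<^sub>R H)" using nF by simp
    then have "H = k *\<^sub>R F" using eq unfolding k_def by simp
    then have "G = k *\<^sub>R transpose F" unfolding H_def
      by (metis transpose_transpose transpose_scalar)
    then have "mat 1 = k *\<^sub>R B" using FG unfolding B_def by (simp add: mm_scale_r)
    then have "B = (1/k) *\<^sub>R mat 1" using k by simp
    moreover have "1/k > 0" using k by simp
    ultimately show "\<exists>c>0. B = c *\<^sub>R mat 1" by blast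
  next
    assume "\<exists>c>0. B = c *\<^sub>R mat 1"
    then obtain c where c: "c > 0" "B = c *\<^sub>R mat 1" by auto
    have trB: "trace B = 3 * c" using c by (simp add: trace_scale trace_I3)
    have "G ** B = transpose F" unfolding B_def by (simp add: matrix_mul_assoc GF)
    then have "c *\<^sub>R G = transpose F" using c by (simp add: mm_scale_r)
    moreover have "G = (1/c) *\<^sub>R (c *\<^sub>R G)" using c by simp
    ultimately have G: "G = (1/c) *\<^sub>R transpose F" by simp
    have "trace (G ** transpose G) = (1/c)^2 * trace (transpose F ** F)"
      unfolding G by (simp add: mm_scale_r mm_scale_l trace_scale transpose_scalar power2_eq_square)
    also have "trace (transpose F ** F) = trace B" unfolding B_def by (rule trace_mul_sym)
    finally show "trace B * trace (G ** transpose G) = 9" using trB c by (simp add: power2_eq_square)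
  qed
qed

lemma part3:
  fixes F :: mat3
  assumes dF: "det F > 0"
  shows "(\<exists>c>0. F ** transpose F = c *\<^sub>R mat 1) \<longleftrightarrow> F \<in> RplusSO3"
proof
  assume "\<exists>c>0. F ** transpose F = c *\<^sub>R mat 1"
  then obtain c where c: "c > 0" "F ** transpose F = c *\<^sub>R mat 1" by auto
  define s where "s = sqrt c"
  have s: "s > 0" "s * s = c" using c s_def by auto
  define Q where "Q = (1/s) *\<^sub>R F"
  have "Q ** transpose Q = (1/s * (1/s)) *\<^sub>R (F ** transpose F)"
    unfolding Q_def by (simp add: mm_scale_r mm_scale_l transpose_scalar)
  also have "\<dots> = mat 1" using c s by simp
  finally have QQ: "Q ** transpose Q = mat 1" .
  then have oQ: "orthogonal_matrix Q"
    using matrix_left_right_inverse orthogonal_matrix_def by blast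
  have "det Q * det Q = 1" using QQ det_mul[of Q "transpose Q"] by simp
  moreover have "det Q > 0" unfolding Q_def using s dF by (simp add: det_scale)
  moreover have "(det Q - 1) * (det Q + 1) = det Q * det Q - 1" by (simp add: algebra_simps)
  ultimately have "det Q = 1" by simp
  then have "rotation_matrix Q" using oQ rotation_matrix_def by blast
  moreover have "F = s *\<^sub>R Q" unfolding Q_def using s by simp
  ultimately show "F \<in> RplusSO3" unfolding RplusSO3_def using s by blast
next
  assume "F \<in> RplusSO3"
  then obtain c Q where cQ: "c > 0" "rotation_matrix Q" "F = c *\<^sub>R Q" unfolding RplusSO3_def by blast
  then have "Q ** transpose Q = mat 1" unfolding rotation_matrix_def orthogonal_matrix_def by blast
  then have "F ** transpose F = (c * c) *\<^sub>R mat 1" using cQ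
    by (simp add: mm_scale_r mm_scale_l transpose_scalar)
  then show "\<exists>c>0. F ** transpose F = c *\<^sub>R mat 1" using cQ by (metis mult_pos_pos)
qed

theorem mainTheorem15:
  fixes \<mu> \<kappa> :: real and Fe \<tau> :: "real^3^3"
  assumes "\<mu> > 0" and "\<kappa> > 0" and "Fe \<in> GLplus"
    and "dev3 \<tau> = \<mu> *\<^sub>R dev3 ((1 / (det (Bmat Fe)) powr (1/3)) *\<^sub>R Bmat Fe)"
  shows "frob_inner (matrix_inv Fe ** dev3 \<tau> ** matrix_inv (transpose Fe)) (mat 1)
           = \<mu> / (det (Bmat Fe)) powr (4/3)
             * (3 * det (Bmat Fe) - (1/3) * trace (Bmat Fe) * trace (Cof (Bmat Fe)))
    \<and> (frob_inner (matrix_inv Fe ** dev3 \<tau> ** matrix_inv (transpose Fe)) (mat 1) = 0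
           \<longleftrightarrow> (\<exists>c>0. Bmat Fe = c *\<^sub>R mat 1))
    \<and> ((\<exists>c>0. Bmat Fe = c *\<^sub>R mat 1) \<longleftrightarrow> Fe \<in> RplusSO3)
    \<and> (\<forall>lam Fp. lam > 0 \<longrightarrow> Fp \<in> GLplus \<longrightarrow>
           (SH_ddet lam Fe Fp \<tau> \<noteq> 0 \<longleftrightarrow> Fe \<notin> RplusSO3))"
proof -
  define F where "F = Fe"
  have dF: "det F > 0" using assms(3) unfolding F_def GLplus_def by simp
  define G where "G = matrix_inv F"
  define B where "B = F ** transpose F"
  have BB: "Bmat Fe = B" unfolding B_def F_def Bmat_def ..
  have FG: "F ** G = mat 1" and GF: "G ** F = mat 1" using inv_ok[of F] dF G_def by auto
  have invT: "matrix_inv (transpose F) = transpose G" using inv_transpose dF G_def by simp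
  define d where "d = det B"
  have d: "d > 0" unfolding d_def B_def using dF by (simp add: det_mul)
  define t where "t = trace (G ** transpose G)"
  define D where "D = dev3 \<tau>"
  define a where "a = 1 / d powr (1/3)"
  have a: "a > 0" using d a_def by simp
  have D: "D = (\<mu> * a) *\<^sub>R B - (\<mu> * (1/3) * a * trace B) *\<^sub>R mat 1"
    using assms(4) unfolding D_def BB a_def[symmetric] d_def[symmetric] dev3_def
    by (simp add: trace_scale algebra_simps)
  have P1: "G ** B ** transpose G = mat 1"
  proof -
    have "G ** B ** transpose G = (G ** F) ** transpose F ** transpose G"
      unfolding B_def by (simp add: matrix_mul_assoc)
    also have "\<dots> = transpose F ** transpose G" using GF by simp
    also have "\<dots> = transpose (G ** F)" by (simp add: matrix_transpose_mul)
    also have "\<dots> = mat 1" using GF by simp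
    finally show ?thesis .
  qed
  define Q where "Q = G ** D ** transpose G"
  have Q: "Q = (\<mu> * a) *\<^sub>R mat 1 - (\<mu> * (1/3) * a * trace B) *\<^sub>R (G ** transpose G)"
    unfolding Q_def D sandwich P1 ..
  define v where "v = trace Q"
  have v: "v = \<mu> * a * (3 - trace B * t / 3)"
    unfolding v_def Q t_def by (simp add: trace_sub trace_scale trace_I3 algebra_simps)
  have LHS: "frob_inner (matrix_inv Fe ** dev3 \<tau> ** matrix_inv (transpose Fe)) (mat 1) = v"
    unfolding v_def Q_def frob_I_r D_def[symmetric] F_def[symmetric] invT G_def ..
  have Bsym: "transpose B = B" unfolding B_def by (simp add: matrix_transpose_mul)
  have invB: "matrix_inv B = transpose G ** G"
  proof (rule inv_unique)
    have "B ** (transpose G ** G) = F ** transpose (G ** F) ** G"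
      unfolding B_def by (simp add: matrix_mul_assoc matrix_transpose_mul)
    then show "B ** (transpose G ** G) = mat 1" using GF FG by simp
  qed
  have trCof: "trace (Cof B) = d * t"
    unfolding Cof_def Bsym invB t_def d_def[symmetric] trace_scale
    by (simp add: trace_mul_sym[of "transpose G" G])
  have dp: "d powr (4/3) = d * d powr (1/3)"
  proof -
    have "d powr (4/3) = d powr (1 + 1/3)" by simp
    also have "\<dots> = d powr 1 * d powr (1/3)" by (rule powr_add)
    finally show ?thesis using d by simp
  qed
  have eq1: "v = \<mu> / d powr (4/3) * (3 * d - (1/3) * trace B * (d * t))"
    unfolding v dp a_def using d by (simp add: field_simps)
  note p12 = part123[OF dF, folded G_def B_def t_def]
  have v0: "v = 0 \<longleftrightarrow> (\<exists>c>0. B = c *\<^sub>R mat 1)"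
  proof -
    have "v = 0 \<longleftrightarrow> trace B * t = 9" unfolding v using assms(1) a by auto
    then show ?thesis using p12(2) unfolding t_def by simp
  qed
  have p3: "(\<exists>c>0. B = c *\<^sub>R mat 1) \<longleftrightarrow> Fe \<in> RplusSO3"
    using part3[OF dF] unfolding B_def F_def .
  have p4: "SH_ddet lam Fe Fp \<tau> \<noteq> 0 \<longleftrightarrow> v \<noteq> 0" if lam: "lam > 0" and Fp: "Fp \<in> GLplus" for lam Fp
  proof -
    define P where "P = Fp"
    have dP: "det P > 0" using Fp unfolding P_def GLplus_def by simp
    define Pi where "Pi = matrix_inv P"
    have PPi: "P ** Pi = mat 1" and PiP: "Pi ** P = mat 1" using inv_ok[of P] dP Pi_def by auto
    define M where "M = transpose P ** P"
    define dd where "dd = det M"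
    have dd: "dd > 0" unfolding dd_def M_def using dP by (simp add: det_mul)
    define s where "s = 1 / dd powr (1/3)"
    have s: "s > 0" using dd s_def by simp
    have Cb: "Cbar_p Fp = s *\<^sub>R M" unfolding Cbar_p_def s_def dd_def M_def P_def ..
    have CbP: "Cbar_p P = s *\<^sub>R M" using Cb P_def by simp
    have dCb: "det (s *\<^sub>R M) \<noteq> 0" using s dd unfolding dd_def by (simp add: det_scale)
    have dinv: "det (matrix_inv (s *\<^sub>R M)) \<noteq> 0"
    proof -
      have "det (s *\<^sub>R M) * det (matrix_inv (s *\<^sub>R M)) = 1"
        using inv_ok[OF dCb] det_mul[of "s *\<^sub>R M" "matrix_inv (s *\<^sub>R M)"] by simp
      then show ?thesis by auto
    qed
    have iFP: "matrix_inv (F ** P) = Pi ** G"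
      by (rule inv_unique) (metis FG PPi matrix_mul_assoc matrix_mul_rid)
    have dFP: "det (F ** P) \<noteq> 0" using dF dP by (simp add: det_mul)
    have iFPT: "matrix_inv (transpose (F ** P)) = transpose G ** transpose Pi"
      using inv_transpose[OF dFP] iFP by (simp add: matrix_transpose_mul)
    define k where "k = - (2/3) * lam * trace B"
    define n where "n = 1 / frob_norm D"
    have "det (0::mat3) = 0" by (simp add: det_3)
    then have "F \<noteq> 0" using dF by auto
    then have trBpos: "trace B > 0" unfolding B_def trace_inner by simp
    have k: "k \<noteq> 0" unfolding k_def using lam trBpos by simp
    have PiTPT: "transpose Pi ** transpose P = mat 1"
      using PiP PPi by (metis matrix_transpose_mul transpose_mat)
    have X: "SH_rhs lam Fe Fp \<tau> ** Cbar_p Fp = (k * n * s) *\<^sub>R (Pi ** Q ** P)"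
    proof -
      have "SH_rhs lam Fe Fp \<tau> ** Cbar_p Fp
          = (k * n * s) *\<^sub>R (Pi ** G ** D ** transpose G ** (transpose Pi ** transpose P) ** P)"
        unfolding SH_rhs_def Cb BB[folded k_def] F_def[symmetric] P_def[symmetric] iFP iFPT
          D_def[symmetric] n_def[symmetric] M_def
        by (simp add: CbP mm_neg_l mm_scale_r mm_scale_l matrix_mul_assoc k_def B_def Bmat_def M_def mult.commute mult.left_commute)
      also have "\<dots> = (k * n * s) *\<^sub>R (Pi ** Q ** P)"
        unfolding PiTPT Q_def by (simp add: matrix_mul_assoc)
      finally show ?thesis .
    qed
    have trPQP: "trace (Pi ** Q ** P) = v"
    proof -
      have "trace (Pi ** Q ** P) = trace (P ** (Pi ** Q))" by (rule trace_mul_sym)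
      also have "\<dots> = trace Q" by (simp add: matrix_mul_assoc PPi)
      finally show ?thesis unfolding v_def .
    qed
    have SH: "SH_ddet lam Fe Fp \<tau> = det (matrix_inv (s *\<^sub>R M)) * (k * n * s * v)"
      unfolding SH_ddet_def frob_I_l X trace_scale trPQP unfolding Cb ..
    have nz: "v \<noteq> 0 \<Longrightarrow> n \<noteq> 0"
    proof -
      assume "v \<noteq> 0"
      then have "D \<noteq> 0" unfolding v_def Q_def by (auto simp: trace_def)
      then have "frob_norm D \<noteq> 0" unfolding frob_norm_def frob_inner_def trace_inner by simp
      then show "n \<noteq> 0" unfolding n_def by simp
    qed
    show ?thesis unfolding SH using dinv k s nz by auto
  qed
  have e1: "v = \<mu> / (det (Bmat Fe)) powr (4/3)
             * (3 * det (Bmat Fe) - (1/3) * trace (Bmat Fe) * trace (Cof (Bmat Fe)))"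
    unfolding BB d_def[symmetric] trCof by (rule eq1)
  have e2: "v = 0 \<longleftrightarrow> (\<exists>c>0. Bmat Fe = c *\<^sub>R mat 1)" unfolding BB by (rule v0)
  have e3: "(\<exists>c>0. Bmat Fe = c *\<^sub>R mat 1) \<longleftrightarrow> Fe \<in> RplusSO3" unfolding BB by (rule p3)
  have e4: "\<forall>lam Fp. lam > 0 \<longrightarrow> Fp \<in> GLplus \<longrightarrow>
           (SH_ddet lam Fe Fp \<tau> \<noteq> 0 \<longleftrightarrow> Fe \<notin> RplusSO3)"
    using p4 v0 p3 by blast
  show ?thesis unfolding LHS using e1 e2 e3 e4 by blast
qed
end
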